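(* Let $G\subset\mathbb{R}^2$ be (the open domain bounded by) a convex polygon with smallest inner angle $\alpha\in(0,\pi)$. Then \[ A_G\ge 1+\frac{1}{\sin\frac{\alpha}{2}}. \]
   Context: For a domain $G\subsetneq\mathbb{R}^n$ let $d_G(x)=d(x,\partial G)$. The quasihyperbolic distance is $k_G(x,y)=\inf_\gamma\int_\gamma\frac{|dx|}{d_G(x)}$ over rectifiable curves $\gamma\subset G$ joining $x$ and $y$. The distance ratio metric is $j_G(x,y)=\log\left(1+\frac{|x-y|}{\min\{d_G(x),d_G(y)\}}\right)$. The uniformity constant is $A_G=\inf\{A\ge1: k_G(x,y)\le A\,j_G(x,y)\text{ for all }x,y\in G\}$ (with $\inf\emptyset=+\infty$). *)

theory Defs
  imports "HOL-Analysis.Analysis"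
begin

definition bdist :: "'a::euclidean_space set \<Rightarrow> 'a \<Rightarrow> real" where
  "bdist G x = infdist x (frontier G)"

definition partition01 :: "nat \<Rightarrow> (nat \<Rightarrow> real) \<Rightarrow> bool" where
  "partition01 n t \<longleftrightarrow> t 0 = 0 \<and> t n = 1 \<and> (\<forall>i<n. t i \<le> t (Suc i))"

definition curve_length :: "(real \<Rightarrow> 'a::euclidean_space) \<Rightarrow> ereal" where
  "curve_length \<gamma> = (SUP nt \<in> {(n,t). partition01 n t}.
      ereal (\<Sum>i<fst nt. dist (\<gamma> (snd nt (Suc i))) (\<gamma> (snd nt i))))"

definition rectifiable_curve :: "(real \<Rightarrow> 'a::euclidean_space) \<Rightarrow> bool" where
  "rectifiable_curve \<gamma> \<longleftrightarrow> path \<gamma> \<and> curve_length \<gamma> < \<infinity>"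

text \<open>Line integral with respect to arc length of a weight f along \<gamma>,
  as the supremum of lower Riemann--Stieltjes sums (for continuous f and rectifiable \<gamma>
  this equals the arc-length integral).\<close>
definition arclength_integral ::
    "('a::euclidean_space \<Rightarrow> real) \<Rightarrow> (real \<Rightarrow> 'a) \<Rightarrow> ereal" where
  "arclength_integral f \<gamma> = (SUP nt \<in> {(n,t). partition01 n t}.
      ereal (\<Sum>i<fst nt. (INF s \<in> {snd nt i .. snd nt (Suc i)}. f (\<gamma> s)) *
                         dist (\<gamma> (snd nt (Suc i))) (\<gamma> (snd nt i))))"

definition qh_dist :: "'a::euclidean_space set \<Rightarrow> 'a \<Rightarrow> 'a \<Rightarrow> ereal" where
  "qh_dist G x y = (INF \<gamma> \<in> {\<gamma>. rectifiable_curve \<gamma> \<and> path_image \<gamma> \<subseteq> G \<and>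
        pathstart \<gamma> = x \<and> pathfinish \<gamma> = y}.
      arclength_integral (\<lambda>z. 1 / bdist G z) \<gamma>)"

definition j_dist :: "'a::euclidean_space set \<Rightarrow> 'a \<Rightarrow> 'a \<Rightarrow> real" where
  "j_dist G x y = ln (1 + dist x y / min (bdist G x) (bdist G y))"

text \<open>Uniformity constant (Inf of the empty set is \<infinity>).\<close>
definition uniformity_const :: "'a::euclidean_space set \<Rightarrow> ereal" where
  "uniformity_const G = Inf {ereal A | A. A \<ge> 1 \<and>
      (\<forall>x\<in>G. \<forall>y\<in>G. qh_dist G x y \<le> ereal (A * j_dist G x y))}"

definition vec_angle :: "'a::euclidean_space \<Rightarrow> 'a \<Rightarrow> real" where
  "vec_angle u v = arccos ((u \<bullet> v) / (norm u * norm v))"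

text \<open>A convex polygon given by its vertex set P: finitely many points in convex position
  (no vertex in the convex hull of the others) spanning a set with nonempty interior.\<close>
definition convex_polygon_vertices :: "(real^2) set \<Rightarrow> bool" where
  "convex_polygon_vertices P \<longleftrightarrow> finite P \<and> card P \<ge> 3 \<and>
     (\<forall>p\<in>P. p \<notin> convex hull (P - {p})) \<and> interior (convex hull P) \<noteq> {}"

text \<open>Inner angle of the polygon at vertex p: the angle between the two edges at p,
  which equals the largest angle at p subtended by two other vertices.\<close>
definition inner_angle :: "(real^2) set \<Rightarrow> real^2 \<Rightarrow> real" where
  "inner_angle P p = Max {vec_angle (q - p) (r - p) | q r. q \<in> P - {p} \<and> r \<in> P - {p}}"

definition smallest_inner_angle :: "(real^2) set \<Rightarrow> real" where
  "smallest_inner_angle P = Min (inner_angle P ` P)"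

end

theory Submission
  imports Defs
begin

definition hitf :: "real \<Rightarrow> real \<Rightarrow> (real \<Rightarrow> real) \<Rightarrow> real \<Rightarrow> real" where
  "hitf a b h L = Inf {t\<in>{a..b}. L \<le> h t}"

definition hitl :: "real \<Rightarrow> real \<Rightarrow> (real \<Rightarrow> real) \<Rightarrow> real \<Rightarrow> real" where
  "hitl a b h L = Sup {t\<in>{a..b}. L \<le> h t}"

lemma hitf_props:
  assumes cont: "continuous_on {a..b} h" and ab: "a \<le> b" and ha: "h a \<le> L" and hb: "L \<le> h b"
  shows "hitf a b h L \<in> {a..b}" "h (hitf a b h L) = L" "\<forall>t\<in>{a..hitf a b h L}. h t \<le> L"
proof -
  let ?S = "{t\<in>{a..b}. L \<le> h t}"
  have ne: "?S \<noteq> {}" using ab hb by auto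
  have bdd: "bdd_below ?S" by (auto intro: bdd_belowI[of _ a])
  have cl: "closed ?S"
  proof -
    have "?S = {a..b} \<inter> h -` {L..}" by auto
    thus ?thesis using continuous_closed_preimage[OF cont] by auto
  qed
  have mem: "Inf ?S \<in> ?S" using closed_contains_Inf[OF ne bdd cl] .
  show t1: "hitf a b h L \<in> {a..b}" using mem unfolding hitf_def by auto
  have ge: "L \<le> h (hitf a b h L)" using mem unfolding hitf_def by auto
  have lt: "h t < L" if "t \<in> {a..<hitf a b h L}" for t
  proof (rule ccontr)
    assume "\<not> h t < L"
    hence "t \<in> ?S" using that t1 by auto
    hence "Inf ?S \<le> t" using bdd by (rule cInf_lower)
    thus False using that unfolding hitf_def by auto
  qed
  have le: "h (hitf a b h L) \<le> L"
  proof (cases "hitf a b h L = a")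
    case True thus ?thesis using ha by simp
  next
    case False
    let ?x = "hitf a b h L"
    have ax: "a < ?x" using False t1 by auto
    show ?thesis
    proof (rule ccontr)
      assume "\<not> h ?x \<le> L"
      hence pos: "h ?x - L > 0" by simp
      from cont t1 pos obtain d where d: "d > 0" "\<forall>t\<in>{a..b}. dist t ?x < d \<longrightarrow> dist (h t) (h ?x) < h ?x - L"
        unfolding continuous_on_iff by blast
      define t where "t = max a (?x - d/2)"
      have "t \<in> {a..<?x}" using ax d unfolding t_def by auto
      moreover have "t \<in> {a..b}" using ax d t1 unfolding t_def by auto
      moreover have "dist t ?x < d" using ax d unfolding t_def dist_real_def by auto
      ultimately have "h t < L" "dist (h t) (h ?x) < h ?x - L" using lt d by auto
      thus False unfolding dist_real_def by auto
    qed
  qed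
  show "h (hitf a b h L) = L" using ge le by simp
  show "\<forall>t\<in>{a..hitf a b h L}. h t \<le> L"
  proof
    fix t assume "t \<in> {a..hitf a b h L}"
    thus "h t \<le> L" using lt[of t] le by (cases "t = hitf a b h L") auto
  qed
qed

lemma hitf_start:
  assumes "a \<le> b" "L \<le> h a"
  shows "hitf a b h L = a"
  unfolding hitf_def using assms by (intro cInf_eq_minimum) auto

lemma hitf_mono:
  assumes ab: "a \<le> b" and hb: "L' \<le> h b" and LL: "L \<le> L'"
  shows "hitf a b h L \<le> hitf a b h L'"
  unfolding hitf_def
proof (rule cInf_superset_mono)
  show "{t \<in> {a..b}. L' \<le> h t} \<noteq> {}" using ab hb by auto
  show "bdd_below {t \<in> {a..b}. L \<le> h t}" by (auto intro: bdd_belowI[of _ a])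
  show "{t \<in> {a..b}. L' \<le> h t} \<subseteq> {t \<in> {a..b}. L \<le> h t}" using LL by auto
qed

lemma hitl_props:
  assumes cont: "continuous_on {a..b} h" and ab: "a \<le> b" and ha: "L \<le> h a" and hb: "h b \<le> L"
  shows "hitl a b h L \<in> {a..b}" "h (hitl a b h L) = L" "\<forall>t\<in>{hitl a b h L..b}. h t \<le> L"
proof -
  let ?S = "{t\<in>{a..b}. L \<le> h t}"
  have ne: "?S \<noteq> {}" using ab ha by auto
  have bdd: "bdd_above ?S" by (auto intro: bdd_aboveI[of _ b])
  have cl: "closed ?S"
  proof -
    have "?S = {a..b} \<inter> h -` {L..}" by auto
    thus ?thesis using continuous_closed_preimage[OF cont] by auto
  qed
  have mem: "Sup ?S \<in> ?S" using closed_contains_Sup[OF ne bdd cl] .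
  show t1: "hitl a b h L \<in> {a..b}" using mem unfolding hitl_def by auto
  have ge: "L \<le> h (hitl a b h L)" using mem unfolding hitl_def by auto
  have lt: "h t < L" if "t \<in> {hitl a b h L<..b}" for t
  proof (rule ccontr)
    assume "\<not> h t < L"
    hence "t \<in> ?S" using that t1 by auto
    hence "t \<le> Sup ?S" using bdd by (rule cSup_upper)
    thus False using that unfolding hitl_def by auto
  qed
  have le: "h (hitl a b h L) \<le> L"
  proof (cases "hitl a b h L = b")
    case True thus ?thesis using hb by simp
  next
    case False
    let ?x = "hitl a b h L"
    have ax: "?x < b" using False t1 by auto
    show ?thesis
    proof (rule ccontr)
      assume "\<not> h ?x \<le> L"
      hence pos: "h ?x - L > 0" by simp
      from cont t1 pos obtain d where d: "d > 0" "\<forall>t\<in>{a..b}. dist t ?x < d \<longrightarrow> dist (h t) (h ?x) < h ?x - L"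
        unfolding continuous_on_iff by blast
      define t where "t = min b (?x + d/2)"
      have "t \<in> {?x<..b}" using ax d unfolding t_def by auto
      moreover have "t \<in> {a..b}" using ax d t1 unfolding t_def by auto
      moreover have "dist t ?x < d" using ax d unfolding t_def dist_real_def by auto
      ultimately have "h t < L" "dist (h t) (h ?x) < h ?x - L" using lt d by auto
      thus False unfolding dist_real_def by auto
    qed
  qed
  show "h (hitl a b h L) = L" using ge le by simp
  show "\<forall>t\<in>{hitl a b h L..b}. h t \<le> L"
  proof
    fix t assume "t \<in> {hitl a b h L..b}"
    thus "h t \<le> L" using lt[of t] le by (cases "t = hitl a b h L") auto
  qed
qed

lemma hitl_mono:
  assumes ab: "a \<le> b" and ha: "L' \<le> h a" and LL: "L \<le> L'"
  shows "hitl a b h L' \<le> hitl a b h L"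
  unfolding hitl_def
proof (rule cSup_subset_mono)
  show "{t \<in> {a..b}. L' \<le> h t} \<noteq> {}" using ab ha by auto
  show "bdd_above {t \<in> {a..b}. L \<le> h t}" by (auto intro: bdd_aboveI[of _ b])
  show "{t \<in> {a..b}. L' \<le> h t} \<subseteq> {t \<in> {a..b}. L \<le> h t}" using LL by auto
qed

lemma term_lb:
  fixes f :: "real \<Rightarrow> real"
  assumes "a \<le> b" "\<forall>s\<in>{a..b}. m \<le> f s" "0 \<le> m" "l \<le> D" "0 \<le> D"
  shows "m * l \<le> (INF s\<in>{a..b}. f s) * D"
proof -
  have "m \<le> (INF s\<in>{a..b}. f s)" using assms(1,2) by (intro cINF_greatest) auto
  hence "m * D \<le> (INF s\<in>{a..b}. f s) * D" using assms(5) by (rule mult_right_mono)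
  moreover have "m * l \<le> m * D" using assms(3,4) by (simp add: mult_left_mono)
  ultimately show ?thesis by linarith
qed

lemma curve_lower:
  fixes \<gamma> :: "real \<Rightarrow> 'a::euclidean_space" and d :: "'a \<Rightarrow> real"
  assumes pth: "path \<gamma>" and img: "path_image \<gamma> \<subseteq> G"
    and st: "pathstart \<gamma> = x" and fi: "pathfinish \<gamma> = y"
    and dpos: "\<forall>z\<in>G. 0 < d z"
    and dS: "\<forall>z\<in>G. d z \<le> S * dist z p"
    and dY: "\<forall>z\<in>G. d z \<le> D0 + dist z y"
    and S: "S > 0" and lam: "lam > 1" and D0: "D0 > 0"
    and r0: "dist x p > 0"
    and reach1: "dist x p * lam^N \<le> dist y p"
    and reach2: "D0 * lam^N \<le> D0 + dist y p - dist x p * lam^N"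
  shows "ereal (real N * (1 - 1/lam) / S + real N * (1 - 1/lam)) \<le> arclength_integral (\<lambda>z. 1 / d z) \<gamma>"
proof -
  define \<rho>0 where "\<rho>0 = dist x p"
  define h1 where "h1 = (\<lambda>t. dist (\<gamma> t) p)"
  define \<tau> where "\<tau> = (\<lambda>i::nat. hitf 0 1 h1 (\<rho>0 * lam^i))"
  define T where "T = \<tau> N"
  define h2 where "h2 = (\<lambda>t. D0 + dist (\<gamma> t) y)"
  define \<Lambda> where "\<Lambda> = (\<lambda>j::nat. hitl T 1 h2 (D0 * lam^j))"
  have g0: "\<gamma> 0 = x" using st unfolding pathstart_def .
  have g1: "\<gamma> 1 = y" using fi unfolding pathfinish_def .
  have inG: "\<gamma> s \<in> G" if "s \<in> {0..1}" for s using img that unfolding path_image_def by auto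
  have cg: "continuous_on {0..1} \<gamma>" using pth unfolding path_def .
  have c1: "continuous_on {0..1} h1" unfolding h1_def by (intro continuous_intros cg)
  have lampow: "1 \<le> lam^i" for i using lam by simp
  have lampow_mono: "lam^i \<le> lam^j" if "i \<le> j" for i j using lam that by (simp add: power_increasing)
  have r0pos: "\<rho>0 > 0" using r0 unfolding \<rho>0_def .
  have P1: "\<tau> i \<in> {0..1} \<and> h1 (\<tau> i) = \<rho>0 * lam^i \<and> (\<forall>s\<in>{0..\<tau> i}. h1 s \<le> \<rho>0 * lam^i)" if "i \<le> N" for i
  proof -
    have a: "h1 0 \<le> \<rho>0 * lam^i" unfolding h1_def g0 \<rho>0_def using lampow[of i] r0 by simp
    have b: "\<rho>0 * lam^i \<le> h1 1" unfolding h1_def g1 \<rho>0_def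
      using reach1 lampow_mono[OF that] r0 by (meson mult_left_mono less_imp_le order_trans)
    show ?thesis using hitf_props[OF c1 _ a b] unfolding \<tau>_def by auto
  qed
  have P2: "\<tau> 0 = 0" unfolding \<tau>_def by (rule hitf_start) (auto simp: h1_def g0 \<rho>0_def)
  have P3: "\<tau> i \<le> \<tau> (Suc i)" if "i < N" for i
    unfolding \<tau>_def
  proof (rule hitf_mono)
    show "\<rho>0 * lam ^ Suc i \<le> h1 1" unfolding h1_def g1 \<rho>0_def
      using reach1 lampow_mono[of "Suc i" N] that r0 by (meson Suc_leI mult_left_mono less_imp_le order_trans)
    show "\<rho>0 * lam ^ i \<le> \<rho>0 * lam ^ Suc i" using lampow_mono[of i "Suc i"] r0pos by simp
  qed simp
  have T01: "T \<in> {0..1}" and hT: "h1 T = \<rho>0 * lam^N" using P1[of N] unfolding T_def by auto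
  have c2: "continuous_on {T..1} h2" unfolding h2_def
    by (intro continuous_intros continuous_on_subset[OF cg]) (use T01 in auto)
  have h2T: "D0 * lam^N \<le> h2 T"
  proof -
    have "dist y p \<le> dist (\<gamma> T) y + dist (\<gamma> T) p" by (metis dist_commute dist_triangle)
    thus ?thesis using reach2 hT unfolding h2_def h1_def \<rho>0_def by linarith
  qed
  have h21: "h2 1 = D0" unfolding h2_def g1 by simp
  have P4: "\<Lambda> j \<in> {T..1} \<and> h2 (\<Lambda> j) = D0 * lam^j \<and> (\<forall>s\<in>{\<Lambda> j..1}. h2 s \<le> D0 * lam^j)" if "j \<le> N" for j
  proof -
    have a: "D0 * lam^j \<le> h2 T" using h2T lampow_mono[OF that] D0
      by (meson mult_left_mono less_imp_le order_trans)
    have b: "h2 1 \<le> D0 * lam^j" using h21 lampow[of j] D0 by simp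
    show ?thesis using hitl_props[OF c2 _ a b] T01 unfolding \<Lambda>_def by auto
  qed
  have P5: "\<Lambda> (Suc j) \<le> \<Lambda> j" if "j < N" for j
    unfolding \<Lambda>_def
  proof (rule hitl_mono)
    show "D0 * lam ^ Suc j \<le> h2 T" using h2T lampow_mono[of "Suc j" N] that D0
      by (meson Suc_leI mult_left_mono less_imp_le order_trans)
    show "D0 * lam ^ j \<le> D0 * lam ^ Suc j" using lampow_mono[of j "Suc j"] D0 by simp
  qed (use T01 in auto)
  define t where "t = (\<lambda>i. if i \<le> N then \<tau> i else if i \<le> 2*N+1 then \<Lambda> (2*N+1-i) else 1)"
  define n where "n = 2*N+2"
  have tmono: "t i \<le> t (Suc i)" if "i < n" for i
  proof -
    have "i < N \<or> i = N \<or> (N < i \<and> i \<le> 2*N) \<or> i = 2*N+1" using that n_def by linarith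
    then consider "i < N" | "i = N" | "N < i" "i \<le> 2*N" | "i = 2*N+1" by blast
    thus ?thesis
    proof cases
      case 1 thus ?thesis using P3 unfolding t_def by auto
    next
      case 2 thus ?thesis using P4[of N] unfolding t_def T_def by auto
    next
      case 3
      have e: "2*N+1 - i = Suc (2*N - i)" "2*N+1 - Suc i = 2*N - i" using 3 by auto
      show ?thesis using 3 P5[of "2*N - i"] unfolding t_def e by auto
    next
      case 4 thus ?thesis using P4[of 0] unfolding t_def by auto
    qed
  qed
  have t01: "t i \<in> {0..1}" for i
  proof (cases "i \<le> N")
    case True thus ?thesis using P1[of i] unfolding t_def by simp
  next
    case False
    show ?thesis
    proof (cases "i \<le> 2*N+1")
      case True
      have "2*N+1-i \<le> N" using False by linarith
      hence "\<Lambda> (2*N+1-i) \<in> {T..1}" using P4 by blast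
      thus ?thesis using True False T01 unfolding t_def by auto
    next
      case False2: False
      thus ?thesis using False unfolding t_def by simp
    qed
  qed
  have part: "partition01 n t"
    unfolding partition01_def using tmono P2 by (auto simp: t_def n_def)
  define F where "F = (\<lambda>i. (INF s\<in>{t i..t (Suc i)}. 1 / d (\<gamma> s)) * dist (\<gamma> (t (Suc i))) (\<gamma> (t i)))"
  have fpos: "0 \<le> 1 / d (\<gamma> s)" if "s \<in> {0..1}" for s using dpos inG[OF that] by (simp add: less_imp_le)
  have Fnn: "0 \<le> F i" if "i < n" for i
  proof -
    have "0 * 0 \<le> F i" unfolding F_def
    proof (rule term_lb)
      show "\<forall>s\<in>{t i..t (Suc i)}. 0 \<le> 1 / d (\<gamma> s)"
      proof
        fix s assume "s \<in> {t i..t (Suc i)}"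
        hence "s \<in> {0..1}" using t01[of i] t01[of "Suc i"] by auto
        thus "0 \<le> 1 / d (\<gamma> s)" by (rule fpos)
      qed
    qed (use tmono[OF that] in auto)
    thus ?thesis by simp
  qed
  have F1: "(1 - 1/lam) / S \<le> F i" if "i < N" for i
  proof -
    have ti: "t i = \<tau> i" "t (Suc i) = \<tau> (Suc i)" using that unfolding t_def by auto
    let ?R = "\<rho>0 * lam ^ Suc i"
    have Rpos: "?R > 0" using r0pos lam by simp
    have A: "\<forall>s\<in>{t i..t (Suc i)}. 1/(S * ?R) \<le> 1 / d (\<gamma> s)"
    proof
      fix s assume s: "s \<in> {t i..t (Suc i)}"
      have s01: "s \<in> {0..1}" using s t01[of i] t01[of "Suc i"] by auto
      have "h1 s \<le> ?R" using P1[of "Suc i"] that s ti s01 by auto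
      hence "d (\<gamma> s) \<le> S * ?R" using dS inG[OF s01] S unfolding h1_def
        by (meson mult_left_mono less_imp_le order_trans)
      thus "1/(S * ?R) \<le> 1 / d (\<gamma> s)" using dpos inG[OF s01] by (intro divide_left_mono) auto
    qed
    have B: "?R - \<rho>0 * lam^i \<le> dist (\<gamma> (t (Suc i))) (\<gamma> (t i))"
    proof -
      have "h1 (t (Suc i)) - h1 (t i) \<le> dist (\<gamma> (t (Suc i))) (\<gamma> (t i))"
        unfolding h1_def by (metis dist_triangle diff_le_eq add.commute)
      thus ?thesis using P1[of i] P1[of "Suc i"] that ti by auto
    qed
    have "1/(S * ?R) * (?R - \<rho>0 * lam^i) \<le> F i" unfolding F_def
      by (rule term_lb) (use tmono[of i] that n_def A B Rpos S in auto)
    moreover have "1/(S * ?R) * (?R - \<rho>0 * lam^i) = (1 - 1/lam) / S"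
      using Rpos S lam r0pos by (simp add: field_simps)
    ultimately show ?thesis by simp
  qed
  have F2: "1 - 1/lam \<le> F i" if "N < i" "i \<le> 2*N" for i
  proof -
    define j where "j = 2*N - i"
    have jN: "j < N" using that j_def by auto
    have ti: "t i = \<Lambda> (Suc j)" "t (Suc i) = \<Lambda> j" using that unfolding t_def j_def
      by (auto simp: Suc_diff_le)
    let ?R = "D0 * lam ^ Suc j"
    have Rpos: "?R > 0" using D0 lam by simp
    have A: "\<forall>s\<in>{t i..t (Suc i)}. 1/?R \<le> 1 / d (\<gamma> s)"
    proof
      fix s assume s: "s \<in> {t i..t (Suc i)}"
      have s01: "s \<in> {0..1}" using s t01[of i] t01[of "Suc i"] by auto
      have "h2 s \<le> ?R" using P4[of "Suc j"] jN s ti s01 by auto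
      hence "d (\<gamma> s) \<le> ?R" using dY inG[OF s01] unfolding h2_def by force
      thus "1/?R \<le> 1 / d (\<gamma> s)" using dpos inG[OF s01] by (intro divide_left_mono) auto
    qed
    have B: "?R - D0 * lam^j \<le> dist (\<gamma> (t (Suc i))) (\<gamma> (t i))"
    proof -
      have "h2 (t i) - h2 (t (Suc i)) \<le> dist (\<gamma> (t (Suc i))) (\<gamma> (t i))"
        unfolding h2_def by (metis dist_triangle dist_commute diff_le_eq add.commute add_diff_cancel_left)
      thus ?thesis using P4[of j] P4[of "Suc j"] jN ti by auto
    qed
    have "1/?R * (?R - D0 * lam^j) \<le> F i" unfolding F_def
      by (rule term_lb) (use tmono[of i] that n_def A B Rpos in auto)
    moreover have "1/?R * (?R - D0 * lam^j) = 1 - 1/lam"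
      using Rpos lam D0 by (simp add: field_simps)
    ultimately show ?thesis by simp
  qed
  have "real N * (1 - 1/lam) / S + real N * (1 - 1/lam) \<le> (\<Sum>i<n. F i)"
  proof -
    have disj: "{..<N} \<inter> {N+1..<2*N+1} = {}" by auto
    have sub: "{..<N} \<union> {N+1..<2*N+1} \<subseteq> {..<n}" unfolding n_def by auto
    have "(\<Sum>i\<in>{..<N} \<union> {N+1..<2*N+1}. F i) \<le> (\<Sum>i<n. F i)"
      by (rule sum_mono2) (use sub Fnn in auto)
    moreover have "(\<Sum>i\<in>{..<N} \<union> {N+1..<2*N+1}. F i) = (\<Sum>i<N. F i) + (\<Sum>i\<in>{N+1..<2*N+1}. F i)"
      by (rule sum.union_disjoint) (use disj in auto)
    moreover have "(\<Sum>i<N. (1 - 1/lam) / S) \<le> (\<Sum>i<N. F i)" by (rule sum_mono) (use F1 in auto)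
    moreover have "(\<Sum>i\<in>{N+1..<2*N+1}. 1 - 1/lam) \<le> (\<Sum>i\<in>{N+1..<2*N+1}. F i)" by (rule sum_mono) (use F2 in auto)
    ultimately show ?thesis by simp
  qed
  also have "ereal (\<Sum>i<n. F i) \<le> arclength_integral (\<lambda>z. 1 / d z) \<gamma>"
    unfolding arclength_integral_def
    by (rule SUP_upper2[of "(n,t)"]) (use part in \<open>auto simp: F_def\<close>)
  finally show ?thesis by simp
qed

definition det2 :: "real^2 \<Rightarrow> real^2 \<Rightarrow> real" where
  "det2 a b = a$1 * b$2 - a$2 * b$1"

lemma inner2: "a \<bullet> b = a$1*b$1 + a$2*b$2" for a b :: "real^2"
  by (simp add: inner_vec_def sum_2)

lemma norm2sq: "(norm a)^2 = a$1^2 + a$2^2" for a :: "real^2"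
  unfolding power2_norm_eq_inner inner2 by (simp add: power2_eq_square)

lemma lagrange: "(det2 a b)^2 + (a \<bullet> b)^2 = (norm a)^2 * (norm b)^2"
  unfolding norm2sq by (simp add: inner2 det2_def power2_eq_square algebra_simps)

lemma det2_abs_le: "\<bar>det2 a b\<bar> \<le> norm a * norm b"
proof -
  have "(det2 a b)^2 \<le> (norm a * norm b)^2" using lagrange[of a b]
    by (simp add: power_mult_distrib) (smt (verit) zero_le_power2)
  hence "\<bar>det2 a b\<bar>^2 \<le> (norm a * norm b)^2" by simp
  thus ?thesis by (rule power2_le_imp_le) simp
qed

lemma det2_simps [simp]:
  "det2 (x + y) z = det2 x z + det2 y z"
  "det2 z (x + y) = det2 z x + det2 z y"
  "det2 (x - y) z = det2 x z - det2 y z"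
  "det2 z (x - y) = det2 z x - det2 z y"
  "det2 (k *\<^sub>R x) z = k * det2 x z"
  "det2 z (k *\<^sub>R x) = k * det2 z x"
  "det2 (- x) z = - det2 x z"
  "det2 z (- x) = - det2 z x"
  "det2 x x = 0"
  by (simp_all add: det2_def algebra_simps)

lemma det2_swap: "det2 a b = - det2 b a" by (simp add: det2_def)

lemma decomp2:
  assumes D: "det2 U V \<noteq> 0"
  shows "w = (det2 w V / det2 U V) *\<^sub>R U + (det2 U w / det2 U V) *\<^sub>R V"
proof -
  have e1: "det2 w V * U$1 + det2 U w * V$1 = w$1 * det2 U V" by (simp add: det2_def algebra_simps)
  have e2: "det2 w V * U$2 + det2 U w * V$2 = w$2 * det2 U V" by (simp add: det2_def algebra_simps)
  have "w$1 = (det2 w V * U$1 + det2 U w * V$1) / det2 U V" using e1 D by simp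
  moreover have "w$2 = (det2 w V * U$2 + det2 U w * V$2) / det2 U V" using e2 D by simp
  ultimately show ?thesis unfolding vec_eq_iff forall_2 by (simp add: add_divide_distrib)
qed

lemma bdist_le_out:
  fixes G :: "(real^2) set"
  assumes z: "z \<in> G" and f: "f \<notin> G"
  shows "bdist G z \<le> dist z f"
proof -
  have "closed_segment z f \<inter> frontier G \<noteq> {}"
    by (rule connected_Int_frontier) (use z f in auto)
  then obtain b where b: "b \<in> closed_segment z f" "b \<in> frontier G" by auto
  have "bdist G z \<le> dist z b" unfolding bdist_def using b(2) by (rule infdist_le)
  also have "\<dots> \<le> dist z f" using dist_in_closed_segment[OF b(1)] by (simp add: dist_commute)
  finally show ?thesis .
qed

lemma bdist_ge_ball:
  fixes G :: "(real^2) set"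
  assumes "open G" "frontier G \<noteq> {}" "ball z e \<subseteq> G"
  shows "e \<le> bdist G z"
  unfolding bdist_def infdist_def
proof -
  have "e \<le> (INF a\<in>frontier G. dist z a)"
  proof (rule cINF_greatest)
    fix a assume "a \<in> frontier G"
    hence "a \<notin> G" using assms(1) by (simp add: frontier_def interior_open)
    hence "a \<notin> ball z e" using assms(3) by auto
    thus "e \<le> dist z a" by simp
  qed (use assms(2) in auto)
  thus "e \<le> (if frontier G = {} then 0 else INF a\<in>frontier G. dist z a)" using assms(2) by simp
qed

definition cA :: "real^2 \<Rightarrow> real^2 \<Rightarrow> real^2 \<Rightarrow> real" where
  "cA U V w = det2 w V / det2 U V"
definition cB :: "real^2 \<Rightarrow> real^2 \<Rightarrow> real^2 \<Rightarrow> real" where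
  "cB U V w = det2 U w / det2 U V"

context
  fixes U V :: "real^2"
  assumes nU: "norm U = 1" and nV: "norm V = 1" and cb: "\<bar>U \<bullet> V\<bar> < 1"
begin

lemma D_sq: "(det2 U V)^2 = 1 - (U \<bullet> V)^2"
  using lagrange[of U V] nU nV by simp

lemma D_ne: "det2 U V \<noteq> 0"
proof
  assume "det2 U V = 0"
  hence "(U \<bullet> V)^2 = 1" using D_sq by simp
  thus False using cb by (simp add: abs_square_eq_1)
qed

lemma cAB_simps [simp]:
  "cA U V (x + y) = cA U V x + cA U V y"
  "cA U V (x - y) = cA U V x - cA U V y"
  "cA U V (k *\<^sub>R x) = k * cA U V x"
  "cB U V (x + y) = cB U V x + cB U V y"
  "cB U V (x - y) = cB U V x - cB U V y"
  "cB U V (k *\<^sub>R x) = k * cB U V x"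
  "cA U V U = 1" "cA U V V = 0" "cB U V U = 0" "cB U V V = 1"
  "cA U V 0 = 0" "cB U V 0 = 0"
  using D_ne by (simp_all add: cA_def cB_def add_divide_distrib diff_divide_distrib det2_swap[of V U])
    (simp_all add: det2_def)

lemma decomp: "w = cA U V w *\<^sub>R U + cB U V w *\<^sub>R V"
  unfolding cA_def cB_def by (rule decomp2[OF D_ne])

lemma coordA_bound: "\<bar>cA U V w\<bar> * \<bar>det2 U V\<bar> \<le> norm w"
  using D_ne det2_abs_le[of w V] nV by (simp add: cA_def abs_divide)

lemma coordB_bound: "\<bar>cB U V w\<bar> * \<bar>det2 U V\<bar> \<le> norm w"
  using D_ne det2_abs_le[of U w] nU by (simp add: cB_def abs_divide)

lemma norm_comb: "(norm (a *\<^sub>R U + b *\<^sub>R V))^2 = a^2 + b^2 + 2*a*b*(U \<bullet> V)"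
proof -
  have "(norm (a *\<^sub>R U + b *\<^sub>R V))^2 = (a *\<^sub>R U + b *\<^sub>R V) \<bullet> (a *\<^sub>R U + b *\<^sub>R V)"
    by (simp add: power2_norm_eq_inner)
  also have "\<dots> = a^2 * (U \<bullet> U) + b^2 * (V \<bullet> V) + 2*a*b*(U \<bullet> V)"
    by (simp add: inner_add_left inner_add_right power2_eq_square algebra_simps inner_commute)
  also have "U \<bullet> U = 1" using nU by (simp add: norm_eq_1)
  also have "V \<bullet> V = 1" using nV by (simp add: norm_eq_1)
  finally show ?thesis by simp
qed

lemma norm_VcU: "norm (V - (U \<bullet> V) *\<^sub>R U) = \<bar>det2 U V\<bar>"
proof -
  have "(norm (V - (U \<bullet> V) *\<^sub>R U))^2 = (norm ((- (U \<bullet> V)) *\<^sub>R U + 1 *\<^sub>R V))^2" by simp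
  also have "\<dots> = 1 - (U \<bullet> V)^2" unfolding norm_comb by (simp add: power2_eq_square)
  also have "\<dots> = \<bar>det2 U V\<bar>^2" using D_sq by simp
  finally have "(norm (V - (U \<bullet> V) *\<^sub>R U))^2 = \<bar>det2 U V\<bar>^2" .
  thus ?thesis by (rule power2_eq_imp_eq) auto
qed

lemma norm_UcV: "norm (U - (U \<bullet> V) *\<^sub>R V) = \<bar>det2 U V\<bar>"
proof -
  have "(norm (U - (U \<bullet> V) *\<^sub>R V))^2 = (norm (1 *\<^sub>R U + (- (U \<bullet> V)) *\<^sub>R V))^2" by simp
  also have "\<dots> = 1 - (U \<bullet> V)^2" unfolding norm_comb by (simp add: power2_eq_square)
  also have "\<dots> = \<bar>det2 U V\<bar>^2" using D_sq by simp
  finally have "(norm (U - (U \<bullet> V) *\<^sub>R V))^2 = \<bar>det2 U V\<bar>^2" .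
  thus ?thesis by (rule power2_eq_imp_eq) auto
qed

end

lemma alg1:
  fixes a b c :: real
  assumes "0 \<le> a" "a \<le> b" "\<bar>c\<bar> < 1"
  shows "a^2 * (1 - c^2) \<le> ((1 - c)/2) * (a^2 + b^2 + 2*a*b*c)"
proof -
  have e: "a^2 + b^2 + 2*a*b*c - 2*a^2*(1+c) = (b-a)*(b+a+2*a*c)" by (simp add: algebra_simps power2_eq_square)
  have "0 \<le> b + a + 2*a*c"
  proof -
    have "0 \<le> 2*a*(1+c)" using assms by simp
    moreover have "2*a*(1+c) \<le> b + a + 2*a*c" using assms by (simp add: algebra_simps)
    ultimately show ?thesis by linarith
  qed
  hence "0 \<le> (b-a)*(b+a+2*a*c)" using assms by simp
  hence h: "2*a^2*(1+c) \<le> a^2 + b^2 + 2*a*b*c" using e by linarith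
  have "((1 - c)/2) * (2*a^2*(1+c)) \<le> ((1 - c)/2) * (a^2 + b^2 + 2*a*b*c)"
    by (rule mult_left_mono[OF h]) (use assms in simp)
  moreover have "((1 - c)/2) * (2*a^2*(1+c)) = a^2 * (1 - c^2)" by (simp add: field_simps power2_eq_square)
  ultimately show ?thesis by linarith
qed

context
  fixes U V p :: "real^2" and G :: "(real^2) set"
  assumes nU: "norm U = 1" and nV: "norm V = 1" and cb: "\<bar>U \<bullet> V\<bar> < 1"
    and opG: "open G"
    and cone: "\<forall>z\<in>G. 0 \<le> cA U V (z - p) \<and> 0 \<le> cB U V (z - p)"
begin

lemma foot_B:
  assumes z: "z \<in> G"
  shows "bdist G z \<le> cB U V (z - p) * \<bar>det2 U V\<bar>"
proof -
  define b where "b = cB U V (z - p)"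
  define c where "c = U \<bullet> V"
  define f where "f = z - b *\<^sub>R (V - c *\<^sub>R U)"
  have b0: "0 \<le> b" using cone z b_def by auto
  have cBf: "cB U V (f - p) = 0"
    unfolding f_def using nU nV cb by (simp add: b_def algebra_simps)
  have fG: "f \<notin> G"
  proof
    assume "f \<in> G"
    then obtain e where e: "e > 0" "ball f e \<subseteq> G" using opG openE by blast
    define g where "g = f - (e/2) *\<^sub>R V"
    have "dist f g < e" unfolding g_def dist_norm using e nV by simp
    hence "g \<in> G" using e by auto
    hence "0 \<le> cB U V (g - p)" using cone by auto
    moreover have "cB U V (g - p) = - e/2"
    proof -
      have "g - p = (f - p) - (e/2) *\<^sub>R V" unfolding g_def by simp
      thus ?thesis using cBf nU nV cb by simp
    qed
    ultimately show False using e by simp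
  qed
  have "bdist G z \<le> dist z f" by (rule bdist_le_out[OF z fG])
  also have "dist z f = b * \<bar>det2 U V\<bar>"
    unfolding f_def dist_norm using norm_VcU[OF nU nV cb] b0 by (simp add: c_def)
  finally show ?thesis unfolding b_def .
qed

lemma foot_A:
  assumes z: "z \<in> G"
  shows "bdist G z \<le> cA U V (z - p) * \<bar>det2 U V\<bar>"
proof -
  define a where "a = cA U V (z - p)"
  define c where "c = U \<bullet> V"
  define f where "f = z - a *\<^sub>R (U - c *\<^sub>R V)"
  have a0: "0 \<le> a" using cone z a_def by auto
  have cAf: "cA U V (f - p) = 0"
    unfolding f_def using nU nV cb by (simp add: a_def algebra_simps)
  have fG: "f \<notin> G"
  proof
    assume "f \<in> G"
    then obtain e where e: "e > 0" "ball f e \<subseteq> G" using opG openE by blast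
    define g where "g = f - (e/2) *\<^sub>R U"
    have "dist f g < e" unfolding g_def dist_norm using e nU by simp
    hence "g \<in> G" using e by auto
    hence "0 \<le> cA U V (g - p)" using cone by auto
    moreover have "cA U V (g - p) = - e/2"
    proof -
      have "g - p = (f - p) - (e/2) *\<^sub>R U" unfolding g_def by simp
      thus ?thesis using cAf nU nV cb by simp
    qed
    ultimately show False using e by simp
  qed
  have "bdist G z \<le> dist z f" by (rule bdist_le_out[OF z fG])
  also have "dist z f = a * \<bar>det2 U V\<bar>"
    unfolding f_def dist_norm using norm_UcV[OF nU nV cb] a0 by (simp add: c_def)
  finally show ?thesis unfolding a_def .
qed

lemma dS:
  assumes z: "z \<in> G" and s: "s > 0" "s^2 = (1 - U \<bullet> V)/2"
  shows "bdist G z \<le> s * dist z p"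
proof -
  define a where "a = cA U V (z - p)"
  define b where "b = cB U V (z - p)"
  define c where "c = U \<bullet> V"
  define m where "m = min a b"
  have ab: "0 \<le> a" "0 \<le> b" using cone z a_def b_def by auto
  have dm: "bdist G z \<le> m * \<bar>det2 U V\<bar>"
    using foot_A[OF z] foot_B[OF z] unfolding m_def a_def b_def by (simp add: min_def)
  have nz: "(dist z p)^2 = a^2 + b^2 + 2*a*b*c"
  proof -
    have "z - p = a *\<^sub>R U + b *\<^sub>R V" unfolding a_def b_def by (rule decomp[OF nU nV cb])
    thus ?thesis using norm_comb[OF nU nV cb, of a b] by (simp add: dist_norm c_def)
  qed
  have key: "m^2 * (1 - c^2) \<le> ((1 - c)/2) * (a^2 + b^2 + 2*a*b*c)"
  proof (cases "a \<le> b")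
    case True thus ?thesis using alg1[of a b c] ab cb unfolding m_def c_def by simp
  next
    case False
    hence "m = b" unfolding m_def by simp
    moreover have "b^2 * (1 - c^2) \<le> ((1 - c)/2) * (b^2 + a^2 + 2*b*a*c)"
      using alg1[of b a c] ab cb False unfolding c_def by simp
    ultimately show ?thesis by (simp add: algebra_simps)
  qed
  have "(m * \<bar>det2 U V\<bar>)^2 \<le> (s * dist z p)^2"
  proof -
    have "(m * \<bar>det2 U V\<bar>)^2 = m^2 * (1 - c^2)"
      using D_sq[OF nU nV cb] by (simp add: power_mult_distrib c_def)
    also have "\<dots> \<le> s^2 * (dist z p)^2"
    proof -
      have "s^2 * (dist z p)^2 = ((1 - c)/2) * (a^2 + b^2 + 2*a*b*c)" using s(2) nz unfolding c_def by simp
      thus ?thesis using key by linarith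
    qed
    finally show ?thesis by (simp add: power_mult_distrib)
  qed
  hence "m * \<bar>det2 U V\<bar> \<le> s * dist z p" by (rule power2_le_imp_le) (use s in simp)
  thus ?thesis using dm by linarith
qed

end

lemma key_angle:
  fixes a b c n :: real
  assumes c: "\<bar>c\<bar> < 1" and a: "0 \<le> a" and b: "b < 0" and n: "0 < n" and nn: "n^2 = a^2 + b^2 + 2*a*b*c"
  shows "a*c + b < c*n"
proof (cases "0 \<le> c")
  case True
  have "n^2 - (a + b*c)^2 = b^2 * (1 - c^2)" using nn by (simp add: algebra_simps power2_eq_square)
  moreover have "0 \<le> b^2 * (1 - c^2)" using c by (simp add: abs_square_less_1 less_imp_le)
  ultimately have "(a + b*c)^2 \<le> n^2" by linarith
  hence "a + b*c \<le> n" by (rule power2_le_imp_le) (use n in simp)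
  hence "c*(a + b*c) \<le> c*n" using True by (rule mult_left_mono)
  moreover have "a*c + b < c*(a + b*c)"
  proof -
    have "c^2 < 1" using c by (simp add: abs_square_less_1)
    hence "b * 1 < b * c^2" using b by (intro mult_strict_left_mono_neg) auto
    thus ?thesis by (simp add: algebra_simps power2_eq_square)
  qed
  ultimately show ?thesis by linarith
next
  case False
  have ac: "a*c \<le> 0" using a False by (simp add: mult_nonneg_nonpos)
  have ypos: "0 < -(a*c + b)" using ac b by linarith
  have "(-(a*c+b))^2 - (-c*n)^2 = (1 - c^2) * (b * (b + 2*a*c))" using nn
    by (simp add: algebra_simps power2_eq_square)
  moreover have "0 < (1 - c^2) * (b * (b + 2*a*c))"
  proof -
    have "0 < 1 - c^2" using c by (simp add: abs_square_less_1)
    moreover have "0 < b * (b + 2*a*c)" using b ac by (intro mult_neg_neg) auto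
    ultimately show ?thesis by simp
  qed
  ultimately have "(-c*n)^2 < (-(a*c+b))^2" by linarith
  hence "-c*n < -(a*c+b)" by (rule power2_less_imp_less) (use ypos in simp)
  thus ?thesis by simp
qed

lemma hull_contra:
  fixes P :: "(real^2) set"
  assumes np: "p \<notin> convex hull (P - {p})" and q: "q \<in> P - {p}" and r: "r \<in> P - {p}" and w: "w \<in> P - {p}"
    and x: "0 \<le> x1" "0 \<le> x2" "0 \<le> x3" "0 < x1 + x2 + x3"
    and eq: "x1 *\<^sub>R (q - p) + x2 *\<^sub>R (r - p) + x3 *\<^sub>R (w - p) = 0"
  shows False
proof -
  define S where "S = x1 + x2 + x3"
  have S: "S > 0" using x S_def by simp
  have "x1 *\<^sub>R q + x2 *\<^sub>R r + x3 *\<^sub>R w = S *\<^sub>R p"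
    using eq unfolding S_def by (simp add: algebra_simps scaleR_add_left)
  hence pe: "p = (x1/S) *\<^sub>R q + (x2/S) *\<^sub>R r + (x3/S) *\<^sub>R w"
  proof -
    assume h: "x1 *\<^sub>R q + x2 *\<^sub>R r + x3 *\<^sub>R w = S *\<^sub>R p"
    have "p = (1/S) *\<^sub>R (S *\<^sub>R p)" using S by simp
    also have "\<dots> = (1/S) *\<^sub>R (x1 *\<^sub>R q + x2 *\<^sub>R r + x3 *\<^sub>R w)" using h by simp
    also have "\<dots> = (x1/S) *\<^sub>R q + (x2/S) *\<^sub>R r + (x3/S) *\<^sub>R w" by (simp add: scaleR_add_right)
    finally show ?thesis .
  qed
  have s1: "(x1/S) + (x2/S) + (x3/S) = 1" using S unfolding add_divide_distrib[symmetric] by (simp add: S_def)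
  have "\<exists>u v w'. p = u *\<^sub>R q + v *\<^sub>R r + w' *\<^sub>R w \<and> 0 \<le> u \<and> 0 \<le> v \<and> 0 \<le> w' \<and> u + v + w' = 1"
    by (rule exI[where x="x1/S"], rule exI[where x="x2/S"], rule exI[where x="x3/S"]) (use pe s1 x S in auto)
  hence "p \<in> convex hull {q, r, w}" unfolding convex_hull_3 by blast
  moreover have "convex hull {q, r, w} \<subseteq> convex hull (P - {p})" using q r w by (intro hull_mono) auto
  ultimately show False using np by auto
qed

lemma unif_ge1: "ereal 1 \<le> uniformity_const G"
  unfolding uniformity_const_def by (rule Inf_greatest) auto

lemma ball_tri:
  fixes U V p :: "real^2" and K :: "(real^2) set"
  assumes nU: "norm U = 1" and nV: "norm V = 1" and cb: "\<bar>U \<bullet> V\<bar> < 1"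
    and ku: "ku > 0" and kv: "kv > 0" and K: "convex K" "p \<in> K" "p + ku *\<^sub>R U \<in> K" "p + kv *\<^sub>R V \<in> K"
    and e: "e > 0" and ea: "e / \<bar>det2 U V\<bar> \<le> a" and eb: "e / \<bar>det2 U V\<bar> \<le> b"
    and sum: "(a + e / \<bar>det2 U V\<bar>)/ku + (b + e / \<bar>det2 U V\<bar>)/kv \<le> 1"
  shows "ball (p + a *\<^sub>R U + b *\<^sub>R V) e \<subseteq> K"
proof
  define D where "D = \<bar>det2 U V\<bar>"
  have D: "D > 0" using D_ne[OF nU nV cb] D_def by simp
  fix w assume w: "w \<in> ball (p + a *\<^sub>R U + b *\<^sub>R V) e"
  define \<delta> where "\<delta> = w - (p + a *\<^sub>R U + b *\<^sub>R V)"
  have nd: "norm \<delta> < e" using w unfolding \<delta>_def by (simp add: dist_norm norm_minus_commute)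
  define a' where "a' = a + cA U V \<delta>"
  define b' where "b' = b + cB U V \<delta>"
  have bA: "\<bar>cA U V \<delta>\<bar> < e / D" using coordA_bound[OF nU nV cb, of \<delta>] nd D unfolding D_def
    by (simp add: field_simps)
  have bB: "\<bar>cB U V \<delta>\<bar> < e / D" using coordB_bound[OF nU nV cb, of \<delta>] nd D unfolding D_def
    by (simp add: field_simps)
  have a'0: "0 \<le> a'" using bA ea unfolding a'_def D_def by linarith
  have b'0: "0 \<le> b'" using bB eb unfolding b'_def D_def by linarith
  have wdec: "w = p + a' *\<^sub>R U + b' *\<^sub>R V"
  proof -
    have "\<delta> = cA U V \<delta> *\<^sub>R U + cB U V \<delta> *\<^sub>R V" by (rule decomp[OF nU nV cb])
    thus ?thesis unfolding a'_def b'_def \<delta>_def by (simp add: algebra_simps scaleR_add_left)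
  qed
  define l1 where "l1 = a'/ku"
  define l2 where "l2 = b'/kv"
  have l1: "0 \<le> l1" and l2: "0 \<le> l2" using a'0 b'0 ku kv unfolding l1_def l2_def by auto
  have "l1 \<le> (a + e/D)/ku" unfolding l1_def using bA ku unfolding a'_def by (intro divide_right_mono) auto
  moreover have "l2 \<le> (b + e/D)/kv" unfolding l2_def using bB kv unfolding b'_def by (intro divide_right_mono) auto
  ultimately have l12: "l1 + l2 \<le> 1" using sum unfolding D_def by linarith
  have "w = (1 - l1 - l2) *\<^sub>R p + l1 *\<^sub>R (p + ku *\<^sub>R U) + l2 *\<^sub>R (p + kv *\<^sub>R V)"
    unfolding wdec l1_def l2_def using ku kv by (simp add: algebra_simps)
  hence "\<exists>u v w'. w = u *\<^sub>R p + v *\<^sub>R (p + ku *\<^sub>R U) + w' *\<^sub>R (p + kv *\<^sub>R V) \<and> 0 \<le> u \<and> 0 \<le> v \<and> 0 \<le> w' \<and> u + v + w' = 1"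
    by (intro exI[where x="1 - l1 - l2"] exI[where x=l1] exI[where x=l2]) (use l1 l2 l12 in auto)
  hence "w \<in> convex hull {p, p + ku *\<^sub>R U, p + kv *\<^sub>R V}" unfolding convex_hull_3 by blast
  moreover have "convex hull {p, p + ku *\<^sub>R U, p + kv *\<^sub>R V} \<subseteq> K" using K by (intro hull_minimal) auto
  ultimately show "w \<in> K" by auto
qed

lemma angle_big:
  fixes U V :: "real^2"
  assumes nU: "norm U = 1" and nV: "norm V = 1" and cb: "\<bar>U \<bullet> V\<bar> < 1"
    and a: "0 \<le> a" and b: "b < 0" and k: "k > 0"
  shows "arccos (U \<bullet> V) < vec_angle (k *\<^sub>R V) (a *\<^sub>R U + b *\<^sub>R V)"
proof -
  define W where "W = a *\<^sub>R U + b *\<^sub>R V"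
  define c where "c = U \<bullet> V"
  have "cB U V W = b" unfolding W_def using nU nV cb by simp
  hence Wn: "W \<noteq> 0" using b nU nV cb by auto
  define n where "n = norm W"
  have n: "n > 0" using Wn n_def by simp
  have nn: "n^2 = a^2 + b^2 + 2*a*b*c" unfolding n_def W_def c_def by (rule norm_comb[OF nU nV cb])
  have VV: "V \<bullet> V = 1" using nV by (simp add: norm_eq_1)
  have VW: "V \<bullet> W = a*c + b" unfolding W_def c_def using VV
    by (simp add: inner_add_right inner_commute)
  have ang: "vec_angle (k *\<^sub>R V) W = arccos ((V \<bullet> W) / n)"
    unfolding vec_angle_def n_def using k nV by simp
  have lt: "(V \<bullet> W) / n < c"
    using key_angle[of c a b n] cb a b n nn VW unfolding c_def by (simp add: divide_less_eq mult.commute)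
  have ge: "-1 \<le> (V \<bullet> W) / n"
  proof -
    have "\<bar>V \<bullet> W\<bar> \<le> norm V * norm W" by (rule Cauchy_Schwarz_ineq2)
    hence "\<bar>V \<bullet> W\<bar> \<le> n" using nV n_def by simp
    hence "- n \<le> V \<bullet> W" by (simp add: abs_le_iff)
    thus ?thesis using n by (simp add: le_divide_eq)
  qed
  have "arccos c < arccos ((V \<bullet> W) / n)"
    by (rule arccos_less_arccos[OF ge lt]) (use cb c_def in simp)
  thus ?thesis using ang unfolding c_def W_def by simp
qed

lemma cone_convex:
  fixes U V p :: "real^2"
  assumes nU: "norm U = 1" and nV: "norm V = 1" and cb: "\<bar>U \<bullet> V\<bar> < 1"
  shows "convex {z. 0 \<le> cA U V (z - p) \<and> 0 \<le> cB U V (z - p)}"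
proof (rule convexI)
  fix x y and s t :: real
  assume x: "x \<in> {z. 0 \<le> cA U V (z - p) \<and> 0 \<le> cB U V (z - p)}"
    and y: "y \<in> {z. 0 \<le> cA U V (z - p) \<and> 0 \<le> cB U V (z - p)}"
    and s0: "0 \<le> s" and t0: "0 \<le> t" and st1: "s + t = 1"
  have st: "0 \<le> s \<and> 0 \<le> t \<and> s + t = 1" using s0 t0 st1 by simp
  have e: "s *\<^sub>R x + t *\<^sub>R y - p = s *\<^sub>R (x - p) + t *\<^sub>R (y - p)"
  proof -
    have "p = (s + t) *\<^sub>R p" using st by simp
    hence "s *\<^sub>R x + t *\<^sub>R y - p = s *\<^sub>R x + t *\<^sub>R y - (s + t) *\<^sub>R p" by simp
    thus ?thesis by (simp add: algebra_simps scaleR_add_left)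
  qed
  show "s *\<^sub>R x + t *\<^sub>R y \<in> {z. 0 \<le> cA U V (z - p) \<and> 0 \<le> cB U V (z - p)}"
    unfolding mem_Collect_eq e using x y st nU nV cb by simp
qed

lemma core:
  fixes P G :: "(real^2) set" and p q r U V :: "real^2" and \<alpha> :: real
  assumes finP: "finite P"
    and np: "p \<notin> convex hull (P - {p})" and pP: "p \<in> P"
    and qP: "q \<in> P - {p}" and rP: "r \<in> P - {p}"
    and amax: "\<forall>w\<in>P-{p}. vec_angle (q-p) (w-p) \<le> \<alpha> \<and> vec_angle (r-p) (w-p) \<le> \<alpha>"
    and Gdef: "G = interior (convex hull P)" and Gne: "G \<noteq> {}"
    and Udef: "U = (1/norm(q-p)) *\<^sub>R (q-p)" and Vdef: "V = (1/norm (r-p)) *\<^sub>R (r-p)"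
    and cb: "\<bar>U \<bullet> V\<bar> < 1" and aeq: "\<alpha> = arccos (U \<bullet> V)"
  shows "ereal (1 + 1/sin(\<alpha>/2)) \<le> uniformity_const G"
proof -
  define ku where "ku = norm (q - p)"
  define kv where "kv = norm (r - p)"
  have ku: "ku > 0" using qP ku_def by auto
  have kv: "kv > 0" using rP kv_def by auto
  have nU: "norm U = 1" using ku unfolding Udef ku_def by simp
  have nV: "norm V = 1" using kv unfolding Vdef kv_def by simp
  have qU: "q - p = ku *\<^sub>R U" using ku unfolding Udef ku_def by simp
  have rV: "r - p = kv *\<^sub>R V" using kv unfolding Vdef kv_def by simp
  define c where "c = U \<bullet> V"
  have coneP: "0 \<le> cA U V (w - p) \<and> 0 \<le> cB U V (w - p)" if wP: "w \<in> P" for w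
  proof (cases "w = p")
    case True thus ?thesis using nU nV cb by simp
  next
    case False
    hence wP': "w \<in> P - {p}" using wP by simp
    define a where "a = cA U V (w - p)"
    define b where "b = cB U V (w - p)"
    have W: "w - p = a *\<^sub>R U + b *\<^sub>R V" unfolding a_def b_def by (rule decomp[OF nU nV cb])
    show ?thesis unfolding a_def[symmetric] b_def[symmetric]
    proof (rule ccontr)
      assume "\<not> (0 \<le> a \<and> 0 \<le> b)"
      hence "(a < 0 \<and> b < 0) \<or> (0 \<le> a \<and> b < 0) \<or> (a < 0 \<and> 0 \<le> b)" by linarith
      then consider "a < 0" "b < 0" | "0 \<le> a" "b < 0" | "a < 0" "0 \<le> b" by blast
      thus False
      proof cases
        case 1
        have "(-a/ku) *\<^sub>R (q - p) + (-b/kv) *\<^sub>R (r - p) + 1 *\<^sub>R (w - p) = 0"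
          unfolding qU rV W using ku kv by simp
        moreover have "0 \<le> -a/ku" using 1 ku by (intro divide_nonneg_pos) auto
        moreover have "0 \<le> -b/kv" using 1 kv by (intro divide_nonneg_pos) auto
        ultimately show False using hull_contra[OF np qP rP wP', of "-a/ku" "-b/kv" 1] by linarith
      next
        case 2
        have "arccos (U \<bullet> V) < vec_angle (kv *\<^sub>R V) (a *\<^sub>R U + b *\<^sub>R V)"
          by (rule angle_big[OF nU nV cb 2 kv])
        moreover have "vec_angle (r - p) (w - p) \<le> \<alpha>" using amax wP' by auto
        hence "vec_angle (kv *\<^sub>R V) (a *\<^sub>R U + b *\<^sub>R V) \<le> \<alpha>" unfolding rV W .
        ultimately show False using aeq by simp
      next
        case 3
        have cb': "\<bar>V \<bullet> U\<bar> < 1" using cb by (simp add: inner_commute)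
        have "arccos (V \<bullet> U) < vec_angle (ku *\<^sub>R U) (b *\<^sub>R V + a *\<^sub>R U)"
          by (rule angle_big[OF nV nU cb' _ _ ku]) (use 3 in auto)
        moreover have "vec_angle (q - p) (w - p) \<le> \<alpha>" using amax wP' by auto
        hence "vec_angle (ku *\<^sub>R U) (b *\<^sub>R V + a *\<^sub>R U) \<le> \<alpha>" unfolding qU W by (simp add: add.commute)
        ultimately show False using aeq by (simp add: inner_commute)
      qed
    qed
  qed
  have hullC: "convex hull P \<subseteq> {z. 0 \<le> cA U V (z - p) \<and> 0 \<le> cB U V (z - p)}"
    by (rule hull_minimal) (use coneP cone_convex[OF nU nV cb] in auto)
  have GK: "G \<subseteq> convex hull P" unfolding Gdef by (rule interior_subset)
  have cone: "\<forall>z\<in>G. 0 \<le> cA U V (z - p) \<and> 0 \<le> cB U V (z - p)" using hullC GK by auto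
  have opG: "open G" unfolding Gdef by simp
  have frG: "frontier G \<noteq> {}"
  proof (rule frontier_not_empty[OF Gne])
    have "bounded (convex hull P)" using finP by (rule finite_imp_bounded_convex_hull)
    hence "bounded G" using GK bounded_subset by blast
    thus "G \<noteq> UNIV" by auto
  qed
  define s where "s = sin (\<alpha>/2)"
  have c1: "-1 \<le> c" "c \<le> 1" using cb c_def by auto
  have a0: "0 < \<alpha>" and api: "\<alpha> < pi"
  proof -
    have b: "0 \<le> \<alpha>" "\<alpha> \<le> pi" using arccos_bounded[OF c1] aeq c_def by auto
    have ca: "cos \<alpha> = c" using aeq c_def c1 by simp
    show "0 < \<alpha>" using b ca cb c_def by (metis cos_zero abs_one less_irrefl order_le_less)
    show "\<alpha> < pi" using b ca cb c_def by (metis cos_pi abs_neg_one less_irrefl order_le_less)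
  qed
  have s0: "s > 0" unfolding s_def using a0 api by (intro sin_gt_zero) auto
  have s2: "s^2 = (1 - U \<bullet> V)/2"
  proof -
    have "cos (2 * (\<alpha>/2)) = 1 - 2 * s^2" unfolding s_def by (rule cos_double_sin)
    moreover have "cos (2 * (\<alpha>/2)) = c" using aeq c_def c1 by simp
    ultimately show ?thesis unfolding c_def by simp
  qed
  define B where "B = 1 + 1/s"
  have B1: "B > 1" using s0 unfolding B_def by simp
  show ?thesis unfolding s_def[symmetric] B_def[symmetric]
  proof (rule ccontr)
    assume "\<not> ereal B \<le> uniformity_const G"
    hence "uniformity_const G < ereal B" by simp
    then obtain A where A1: "A \<ge> 1" and AB: "ereal A < ereal B"
      and Aprop: "\<forall>x\<in>G. \<forall>y\<in>G. qh_dist G x y \<le> ereal (A * j_dist G x y)"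
      unfolding uniformity_const_def Inf_less_iff by auto
    have AB': "A < B" using AB by simp
    define lam where "lam = 2*B/(A+B)"
    have lam1: "lam > 1" unfolding lam_def using AB' A1 by (simp add: field_simps)
    have lnlam: "ln lam > 0" using lam1 by simp
    define D where "D = \<bar>det2 U V\<bar>"
    have D0: "D > 0" unfolding D_def using D_ne[OF nU nV cb] by simp
    have D1: "D \<le> 1"
    proof -
      have "D^2 \<le> 1" unfolding D_def using D_sq[OF nU nV cb] by simp
      thus ?thesis using D0 by (simp add: power_le_one_iff abs_square_le_1)
    qed
    define L1 where "L1 = ln (1 + 16/D)"
    obtain N :: nat where N: "2*A*L1/(ln lam * (B - A)) < real N" using reals_Archimedean2 by blast
    define m where "m = min ku kv"
    have m0: "m > 0" using ku kv m_def by simp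
    define R where "R = m/4"
    have R0: "R > 0" using m0 R_def by simp
    have lamN: "lam^N \<ge> 1" using lam1 by simp
    define \<rho> where "\<rho> = R/(8*lam^N)"
    have \<rho>0: "\<rho> > 0" unfolding \<rho>_def using R0 lamN by simp
    have \<rho>R: "\<rho> \<le> R/8" unfolding \<rho>_def using R0 lamN by (simp add: field_simps)
    define x where "x = p + \<rho> *\<^sub>R U + \<rho> *\<^sub>R V"
    define y where "y = p + R *\<^sub>R U + \<rho> *\<^sub>R V"
    define e where "e = \<rho> * D / 2"
    have e0: "e > 0" unfolding e_def using \<rho>0 D0 by simp
    have eD: "e / D = \<rho>/2" unfolding e_def using D0 by simp
    define K where "K = convex hull P"
    have K: "convex K" "p \<in> K" "p + ku *\<^sub>R U \<in> K" "p + kv *\<^sub>R V \<in> K"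
      unfolding K_def using pP qP rP qU rV hull_subset[of P convex]
      by (auto simp: convex_convex_hull) (metis add.commute diff_add_cancel subsetD)+
    have mku: "m \<le> ku" "m \<le> kv" unfolding m_def by auto
    have fr1: "t/ku \<le> 1/2" if "0 \<le> t" "t \<le> m/2" for t using that mku ku by (simp add: field_simps)
    have fr2: "t/kv \<le> 1/2" if "0 \<le> t" "t \<le> m/2" for t using that mku kv by (simp add: field_simps)
    have ballG: "ball z e \<subseteq> G" if "ball z e \<subseteq> K" for z
      unfolding Gdef using that unfolding K_def by (intro interior_maximal) auto
    have bx: "ball x e \<subseteq> G" unfolding x_def
    proof (rule ballG, rule ball_tri[OF nU nV cb ku kv K e0])
      show "e / \<bar>det2 U V\<bar> \<le> \<rho>" using eD \<rho>0 unfolding D_def by simp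
      thus "e / \<bar>det2 U V\<bar> \<le> \<rho>" .
      have "(\<rho> + e / \<bar>det2 U V\<bar>) / ku \<le> 1/2" using fr1[of "\<rho> + \<rho>/2"] eD \<rho>0 \<rho>R R_def unfolding D_def by simp
      moreover have "(\<rho> + e / \<bar>det2 U V\<bar>) / kv \<le> 1/2" using fr2[of "\<rho> + \<rho>/2"] eD \<rho>0 \<rho>R R_def unfolding D_def by simp
      ultimately show "(\<rho> + e / \<bar>det2 U V\<bar>) / ku + (\<rho> + e / \<bar>det2 U V\<bar>) / kv \<le> 1" by linarith
    qed
    have by': "ball y e \<subseteq> G" unfolding y_def
    proof (rule ballG, rule ball_tri[OF nU nV cb ku kv K e0])
      show "e / \<bar>det2 U V\<bar> \<le> R" using eD \<rho>0 \<rho>R unfolding D_def by simp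
      show "e / \<bar>det2 U V\<bar> \<le> \<rho>" using eD \<rho>0 unfolding D_def by simp
      have t: "e / \<bar>det2 U V\<bar> = \<rho>/2" using eD unfolding D_def .
      have "(R + \<rho>/2) / ku \<le> 1/2" by (rule fr1) (use R0 \<rho>0 \<rho>R R_def in auto)
      hence "(R + e / \<bar>det2 U V\<bar>) / ku \<le> 1/2" unfolding t .
      moreover have "(\<rho> + e / \<bar>det2 U V\<bar>) / kv \<le> 1/2" using fr2[of "\<rho> + \<rho>/2"] eD \<rho>0 \<rho>R R_def unfolding D_def by simp
      ultimately show "(R + e / \<bar>det2 U V\<bar>) / ku + (\<rho> + e / \<bar>det2 U V\<bar>) / kv \<le> 1" by linarith
    qed
    have xG: "x \<in> G" using bx e0 by auto
    have yG: "y \<in> G" using by' e0 by auto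
    have dx: "e \<le> bdist G x" by (rule bdist_ge_ball[OF opG frG bx])
    have dy: "e \<le> bdist G y" by (rule bdist_ge_ball[OF opG frG by'])
    define D0 where "D0 = bdist G y"
    have D0pos: "D0 > 0" using dy e0 D0_def by simp
    have D0le: "D0 \<le> \<rho>"
    proof -
      have "D0 \<le> cB U V (y - p) * D" unfolding D0_def D_def by (rule foot_B[OF nU nV cb opG cone yG])
      also have "cB U V (y - p) = \<rho>" unfolding y_def using nU nV cb by simp
      finally show ?thesis using D1 \<rho>0 by (meson mult_left_le order_trans less_imp_le)
    qed
    have dpos: "\<forall>z\<in>G. 0 < bdist G z"
    proof
      fix z assume "z \<in> G"
      then obtain e' where "e' > 0" "ball z e' \<subseteq> G" using opG openE by blast
      thus "0 < bdist G z" using bdist_ge_ball[OF opG frG] by force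
    qed
    have dS': "\<forall>z\<in>G. bdist G z \<le> s * dist z p"
      using dS[OF nU nV cb opG cone _ s0 s2] by blast
    have dY: "\<forall>z\<in>G. bdist G z \<le> D0 + dist z y"
      unfolding D0_def bdist_def by (auto intro: infdist_triangle)
    have dxp: "dist x p \<le> 2 * \<rho>"
    proof -
      have "dist x p = norm (\<rho> *\<^sub>R U + \<rho> *\<^sub>R V)" unfolding x_def dist_norm by simp
      also have "\<dots> \<le> norm (\<rho> *\<^sub>R U) + norm (\<rho> *\<^sub>R V)" by (rule norm_triangle_ineq)
      finally show ?thesis using nU nV \<rho>0 by simp
    qed
    have dxp0: "dist x p > 0"
    proof -
      have "(norm (\<rho> *\<^sub>R U + \<rho> *\<^sub>R V))^2 = \<rho>^2 * (2 + 2*c)"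
        using norm_comb[OF nU nV cb, of \<rho> \<rho>] unfolding c_def by (simp add: algebra_simps power2_eq_square)
      moreover have "\<rho>^2 * (2 + 2*c) > 0" using \<rho>0 cb c_def by auto
      ultimately have "norm (\<rho> *\<^sub>R U + \<rho> *\<^sub>R V) \<noteq> 0" by auto
      thus ?thesis unfolding x_def dist_norm by simp
    qed
    have dyp: "R - \<rho> \<le> dist y p"
    proof -
      have "norm (R *\<^sub>R U) \<le> norm (R *\<^sub>R U + \<rho> *\<^sub>R V) + norm (\<rho> *\<^sub>R V)"
        by (metis add_diff_cancel_right' norm_triangle_ineq4)
      thus ?thesis unfolding y_def dist_norm using nU nV R0 \<rho>0 by simp
    qed
    have dxy: "dist x y = R - \<rho>"
    proof -
      have "x - y = (\<rho> - R) *\<^sub>R U" unfolding x_def y_def by (simp add: algebra_simps)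
      thus ?thesis unfolding dist_norm using nU \<rho>R R0 by simp
    qed
    have lamR: "\<rho> * lam^N = R/8" unfolding \<rho>_def using lamN lam1 by simp
    have reach1: "dist x p * lam^N \<le> dist y p"
    proof -
      have "dist x p * lam^N \<le> (2 * \<rho>) * lam^N" by (rule mult_right_mono) (use dxp lamN in auto)
      hence "dist x p * lam^N \<le> 2 * (\<rho> * lam^N)" by (simp add: mult.assoc)
      thus ?thesis using lamR dyp \<rho>R R0 by linarith
    qed
    have reach2: "D0 * lam^N \<le> D0 + dist y p - dist x p * lam^N"
    proof -
      have "dist x p * lam^N \<le> (2 * \<rho>) * lam^N" by (rule mult_right_mono) (use dxp lamN in auto)
      hence "dist x p * lam^N \<le> 2 * (\<rho> * lam^N)" by (simp add: mult.assoc)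
      moreover have "D0 * lam^N \<le> \<rho> * lam^N" using D0le lamN by (simp add: mult_right_mono)
      ultimately show ?thesis using lamR dyp \<rho>R D0pos R0 by linarith
    qed
    define K0 where "K0 = real N * (1 - 1/lam) / s + real N * (1 - 1/lam)"
    have lowk: "ereal K0 \<le> qh_dist G x y"
      unfolding qh_dist_def
    proof (rule INF_greatest)
      fix \<gamma> assume "\<gamma> \<in> {\<gamma>. rectifiable_curve \<gamma> \<and> path_image \<gamma> \<subseteq> G \<and> pathstart \<gamma> = x \<and> pathfinish \<gamma> = y}"
      hence g: "path \<gamma>" "path_image \<gamma> \<subseteq> G" "pathstart \<gamma> = x" "pathfinish \<gamma> = y"
        unfolding rectifiable_curve_def by auto
      show "ereal K0 \<le> arclength_integral (\<lambda>z. 1 / bdist G z) \<gamma>"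
        unfolding K0_def by (rule curve_lower[OF g dpos dS' dY s0 lam1 D0pos dxp0 reach1 reach2])
    qed
    have jb: "j_dist G x y \<le> real N * ln lam + L1"
    proof -
      have mn: "e \<le> min (bdist G x) (bdist G y)" using dx dy by simp
      have "dist x y / min (bdist G x) (bdist G y) \<le> R / e"
        using dxy mn e0 \<rho>0 R0 by (intro frac_le) auto
      also have "R / e = 16 * lam^N / D" unfolding e_def \<rho>_def using D0 R0 lamN by (simp add: field_simps)
      finally have r: "dist x y / min (bdist G x) (bdist G y) \<le> 16 * lam^N / D" .
      have "1 + 16 * lam^N / D \<le> lam^N * (1 + 16/D)" using lamN D0 by (simp add: field_simps)
      hence le: "1 + dist x y / min (bdist G x) (bdist G y) \<le> lam^N * (1 + 16/D)" using r by linarith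
      have pos: "0 < 1 + dist x y / min (bdist G x) (bdist G y)" using mn e0 by (simp add: add_pos_nonneg)
      have "j_dist G x y \<le> ln (lam^N * (1 + 16/D))" unfolding j_dist_def using le pos by simp
      also have "\<dots> = real N * ln lam + L1"
      proof -
        have p1: "0 < 1 + 16/D" using D0 by (simp add: add_pos_nonneg)
        have p2: "0 < lam^N" using lam1 by simp
        show ?thesis unfolding L1_def using p1 p2 lam1 by (simp add: ln_mult ln_realpow)
      qed
      finally show ?thesis .
    qed
    have "ereal K0 \<le> ereal (A * j_dist G x y)" using lowk Aprop xG yG by (meson order_trans)
    hence "K0 \<le> A * j_dist G x y" by simp
    also have "\<dots> \<le> A * (real N * ln lam + L1)" using jb A1 by (simp add: mult_left_mono)
    finally have K0le: "K0 \<le> A * (real N * ln lam + L1)" .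
    have "real N * ln lam * (A + B) / 2 \<le> K0"
    proof -
      have "ln lam / lam \<le> 1 - 1/lam" using ln_le_minus_one[of lam] lam1 by (simp add: field_simps)
      hence "real N * (ln lam / lam) * B \<le> real N * (1 - 1/lam) * B" using B1
        by (intro mult_right_mono mult_left_mono) auto
      moreover have "K0 = real N * (1 - 1/lam) * B" unfolding K0_def B_def using s0 lam1 by (simp add: field_simps)
      moreover have "real N * (ln lam / lam) * B = real N * ln lam * (A + B) / 2"
        unfolding lam_def using AB' A1 B1 by (simp add: field_simps)
      ultimately show ?thesis by linarith
    qed
    hence "real N * ln lam * (B - A) \<le> 2 * A * L1" using K0le by (simp add: algebra_simps)
    moreover have "2*A*L1 < real N * (ln lam * (B - A))"
      using N lnlam AB' by (simp add: divide_less_eq mult.commute)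
    ultimately show False by (simp add: algebra_simps)
  qed
qed

theorem theorem1p8:
  fixes P :: "(real^2) set" and G :: "(real^2) set" and \<alpha> :: real
  assumes "convex_polygon_vertices P"
    and "G = interior (convex hull P)"
    and "\<alpha> = smallest_inner_angle P"
  shows "ereal (1 + 1 / sin (\<alpha> / 2)) \<le> uniformity_const G"
proof -
  have finP: "finite P" and card3: "3 \<le> card P" and cpos: "\<forall>p\<in>P. p \<notin> convex hull (P - {p})"
    and intne: "interior (convex hull P) \<noteq> {}"
    using assms(1) unfolding convex_polygon_vertices_def by auto
  have Pne: "P \<noteq> {}" using card3 by auto
  have "smallest_inner_angle P \<in> inner_angle P ` P"
    unfolding smallest_inner_angle_def using finP Pne by (intro Min_in) auto
  then obtain p where pP: "p \<in> P" and pa: "\<alpha> = inner_angle P p" using assms(3) by auto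
  define Sa where "Sa = {vec_angle (q - p) (r - p) | q r. q \<in> P - {p} \<and> r \<in> P - {p}}"
  have finSa: "finite Sa" unfolding Sa_def by (rule finite_image_set2) (use finP in auto)
  have Pp: "P - {p} \<noteq> {}"
  proof
    assume "P - {p} = {}"
    hence "P \<subseteq> {p}" by auto
    hence "card P \<le> 1" using card_mono[of "{p}" P] by simp
    thus False using card3 by simp
  qed
  have Sane: "Sa \<noteq> {}" using Pp unfolding Sa_def by auto
  have aS: "\<alpha> = Max Sa" unfolding pa inner_angle_def Sa_def ..
  have "\<alpha> \<in> Sa" using finSa Sane aS by simp
  then obtain q r where qP: "q \<in> P - {p}" and rP: "r \<in> P - {p}" and aqr: "\<alpha> = vec_angle (q - p) (r - p)"
    unfolding Sa_def by auto
  have amax: "\<forall>w\<in>P-{p}. vec_angle (q-p) (w-p) \<le> \<alpha> \<and> vec_angle (r-p) (w-p) \<le> \<alpha>"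
  proof
    fix w assume w: "w \<in> P - {p}"
    have "vec_angle (q-p) (w-p) \<in> Sa" "vec_angle (r-p) (w-p) \<in> Sa" unfolding Sa_def using w qP rP by auto
    thus "vec_angle (q-p) (w-p) \<le> \<alpha> \<and> vec_angle (r-p) (w-p) \<le> \<alpha>" using finSa aS by simp
  qed
  define ku where "ku = norm (q - p)"
  define kv where "kv = norm (r - p)"
  have ku: "ku > 0" using qP ku_def by auto
  have kv: "kv > 0" using rP kv_def by auto
  define U where "U = (1/norm(q-p)) *\<^sub>R (q-p)"
  define V where "V = (1/norm(r-p)) *\<^sub>R (r-p)"
  have nU: "norm U = 1" using ku unfolding U_def ku_def by simp
  have nV: "norm V = 1" using kv unfolding V_def kv_def by simp
  have qU: "q - p = ku *\<^sub>R U" using ku unfolding U_def ku_def by simp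
  have rV: "r - p = kv *\<^sub>R V" using kv unfolding V_def kv_def by simp
  have aeq: "\<alpha> = arccos (U \<bullet> V)"
  proof -
    have "U \<bullet> V = ((q-p) \<bullet> (r-p)) / (norm (q-p) * norm (r-p))"
      unfolding U_def V_def inner_scaleR_left inner_scaleR_right by simp
    thus ?thesis unfolding aqr vec_angle_def by simp
  qed
  have cle: "\<bar>U \<bullet> V\<bar> \<le> 1" using Cauchy_Schwarz_ineq2[of U V] nU nV by simp
  show ?thesis
  proof (cases "U \<bullet> V = 1")
    case True
    hence "\<alpha> = 0" using aeq by simp
    thus ?thesis using unif_ge1[of G] by simp
  next
    case False
    have "U \<bullet> V \<noteq> -1"
    proof
      assume c: "U \<bullet> V = -1"
      have "(U + V) \<bullet> (U + V) = U \<bullet> U + 2 * (U \<bullet> V) + V \<bullet> V"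
        by (simp add: inner_add_left inner_add_right inner_commute)
      also have "\<dots> = 0" using c nU nV by (simp add: norm_eq_1)
      finally have UV: "U + V = 0" by simp
      have "kv *\<^sub>R (q - p) + ku *\<^sub>R (r - p) + 0 *\<^sub>R (q - p) = (ku * kv) *\<^sub>R (U + V)"
        unfolding qU rV by (simp add: algebra_simps)
      hence "kv *\<^sub>R (q - p) + ku *\<^sub>R (r - p) + 0 *\<^sub>R (q - p) = 0" using UV by simp
      thus False using hull_contra[OF cpos[rule_format, OF pP] qP rP qP, of kv ku 0] ku kv by simp
    qed
    hence cb: "\<bar>U \<bullet> V\<bar> < 1" using False cle by auto
    show ?thesis
      by (rule core[OF finP cpos[rule_format, OF pP] pP qP rP amax assms(2) _ U_def V_def cb aeq])
        (use intne assms(2) in simp)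
  qed
qed

end
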